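(* Let $n\ge 4$ and for $j=1,\ldots,n-1$ let $\xi_j\in\mathbb R^{n-1}$ be the vector whose $i$-th entry ($i=1,\ldots,n-1$) is $\cos\frac{(i-1)(2j-1)\pi}{2(n-1)}$; let $e$ be the all-ones vector of length $n-1$. If $n\not\equiv 0\pmod 4$, then $\prod_{j=1}^{n-1}e^{T}\xi_j=\pm 2^{1-\lceil n/2\rceil}\neq 0$. If $n\equiv 0\pmod 4$, then $e^{T}\xi_{n/2}=0$ and $e^{T}\xi_j\neq 0$ for every $j\in\{1,\ldots,n-1\}\setminus\{n/2\}$. *)

theory Defs
  imports Complex_Main
begin

definition xi_entry :: "nat \<Rightarrow> nat \<Rightarrow> nat \<Rightarrow> real" where
  "xi_entry n j i = cos ((real i - 1) * (2 * real j - 1) * pi / (2 * (real n - 1)))"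

definition eT_xi :: "nat \<Rightarrow> nat \<Rightarrow> real" where
  "eT_xi n j = (\<Sum>i = 1..n - 1. xi_entry n j i)"

end

theory Submission
  imports Defs
begin

lemma tele: "2 * sin x * (\<Sum>k<N. cos (2 * real k * x)) = sin ((2 * real N - 1) * x) + sin x"
proof (induction N)
  case 0 then show ?case by simp
next
  case (Suc N)
  have e: "2 * sin x * cos (2 * real N * x) = sin ((2 * real N + 1) * x) - sin ((2 * real N - 1) * x)"
    using sin_add[of "2 * real N * x" x] sin_diff[of "2 * real N * x" x]
    by (simp add: algebra_simps)
  show ?case using Suc e by (simp add: algebra_simps)
qed

lemma sin_odd_half: "j \<ge> 1 \<Longrightarrow> sin ((2 * real j - 1) * pi / 2) = (-1) ^ (j + 1)"
proof -
  assume "j \<ge> 1"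
  then obtain k where k: "j = Suc k" by (cases j) auto
  have e: "(2 * real j - 1) * pi / 2 = real k * pi + pi / 2" using k by (simp add: algebra_simps)
  show ?thesis unfolding e using k by (simp add: sin_add)
qed

lemma cos_odd_half: "j \<ge> 1 \<Longrightarrow> cos ((2 * real j - 1) * pi / 2) = 0"
proof -
  assume "j \<ge> 1"
  then obtain k where k: "j = Suc k" by (cases j) auto
  have e: "(2 * real j - 1) * pi / 2 = real k * pi + pi / 2" using k by (simp add: algebra_simps)
  show ?thesis unfolding e using k by (simp add: cos_add)
qed

lemma eT_formula:
  assumes "n \<ge> 2" "j \<ge> 1"
  defines "\<phi> \<equiv> (2 * real j - 1) * pi / (4 * (real n - 1))"
  shows "2 * sin \<phi> * eT_xi n j = sin \<phi> + (-1) ^ (j + 1) * cos \<phi>"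
proof -
  define m where "m = n - 1"
  have rm: "real n - 1 = real m" using assms(1) unfolding m_def by auto
  have m0: "real m > 0" using assms(1) unfolding m_def by auto
  have "eT_xi n j = (\<Sum>i = Suc 0..m. xi_entry n j i)" unfolding eT_xi_def m_def by simp
  also have "\<dots> = (\<Sum>k<m. xi_entry n j (Suc k))" by (rule sum.atLeast1_atMost_eq)
  also have "\<dots> = (\<Sum>k<m. cos (2 * real k * \<phi>))"
    unfolding xi_entry_def \<phi>_def rm using m0 by (intro sum.cong refl arg_cong[where f=cos]) (simp add: field_simps)
  finally have 1: "2 * sin \<phi> * eT_xi n j = sin ((2 * real m - 1) * \<phi>) + sin \<phi>"
    using tele by simp
  have 2: "2 * real m * \<phi> = (2 * real j - 1) * pi / 2" unfolding \<phi>_def rm using m0 by (simp add: field_simps)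
  have "sin ((2 * real m - 1) * \<phi>) = sin (2 * real m * \<phi> - \<phi>)" by (simp add: algebra_simps)
  also have "\<dots> = (-1) ^ (j + 1) * cos \<phi>"
    unfolding sin_diff 2 using sin_odd_half[OF assms(2)] cos_odd_half[OF assms(2)] by simp
  finally show ?thesis using 1 by simp
qed


lemma prod_pair_even: "(\<Prod>j=1..2*s. f j) = (\<Prod>j=1..s. f j * f (2*s+1-j))" for f :: "nat \<Rightarrow> real"
proof -
  have u: "{1..2*s} = {1..s} \<union> {s+1..2*s}" by auto
  have "(\<Prod>j=1..2*s. f j) = (\<Prod>j=1..s. f j) * (\<Prod>j=s+1..2*s. f j)"
    unfolding u by (rule prod.union_disjoint) auto
  also have "(\<Prod>j=s+1..2*s. f j) = (\<Prod>j=1..s. f (2*s+1-j))"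
    by (rule prod.reindex_bij_witness[where i="\<lambda>j. 2*s+1-j" and j="\<lambda>j. 2*s+1-j"]) auto
  finally show ?thesis by (simp add: prod.distrib)
qed

lemma prod_pair_odd: "(\<Prod>j=1..2*s+1. f j) = (\<Prod>j=1..s. f j * f (2*s+2-j)) * f (s+1)" for f :: "nat \<Rightarrow> real"
proof -
  have u: "{1..2*s+1} = ({1..s} \<union> {s+2..2*s+1}) \<union> {s+1}" by auto
  have "(\<Prod>j=1..2*s+1. f j) = (\<Prod>j=1..s. f j) * (\<Prod>j=s+2..2*s+1. f j) * f (s+1)"
    unfolding u by (subst prod.union_disjoint; simp?; subst prod.union_disjoint; simp?) 
  also have "(\<Prod>j=s+2..2*s+1. f j) = (\<Prod>j=1..s. f (2*s+2-j))"
    by (rule prod.reindex_bij_witness[where i="\<lambda>j. 2*s+2-j" and j="\<lambda>j. 2*s+2-j"]) auto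
  finally show ?thesis by (simp add: prod.distrib)
qed

lemma prod_rev1: "(\<Prod>j=1..s. f j) = (\<Prod>j=1..s. f (s+1-j))" for f :: "nat \<Rightarrow> real"
  by (rule prod.reindex_bij_witness[where i="\<lambda>j. s+1-j" and j="\<lambda>j. s+1-j"]) auto

lemma sgn_pow: "(-1::real) ^ (j+1) = (if even j then -1 else 1)"
  by simp


lemma F_eq:
  assumes "n \<ge> 2" "j \<ge> 1" "j \<le> n - 1"
  defines "\<phi> \<equiv> (2 * real j - 1) * pi / (4 * (real n - 1))"
  shows "sin \<phi> > 0" "cos \<phi> > 0"
    "eT_xi n j = (sin \<phi> + (if even j then -1 else 1) * cos \<phi>) / (2 * sin \<phi>)"
    "\<phi> > 0" "\<phi> < pi / 2"
proof -
  have rn: "real n - 1 > 0" using assms by auto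
  have a: "\<phi> > 0" unfolding \<phi>_def using assms rn by (auto intro!: divide_pos_pos mult_pos_pos)
  have "(2 * real j - 1) / (4 * (real n - 1)) < 1 / 2" using assms rn by (simp add: field_simps)
  then have "(2 * real j - 1) / (4 * (real n - 1)) * pi < 1 / 2 * pi" by (rule mult_strict_right_mono) simp_all
  moreover have "\<phi> = (2 * real j - 1) / (4 * (real n - 1)) * pi" unfolding \<phi>_def by simp
  ultimately show "\<phi> < pi / 2" by simp
  then show "\<phi> > 0" using a by simp
  from \<open>\<phi> < pi / 2\<close> show s: "sin \<phi> > 0" "cos \<phi> > 0" using a by (auto intro!: sin_gt_zero cos_gt_zero)
  show "eT_xi n j = (sin \<phi> + (if even j then -1 else 1) * cos \<phi>) / (2 * sin \<phi>)"
    using eT_formula[OF assms(1,2)] s unfolding \<phi>_def[symmetric] by (cases "even j") (simp_all add: field_simps)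
qed

lemma even_case:
  assumes n: "n = 2 * s + 1" and s: "s \<ge> 1"
  shows "\<bar>\<Prod>j=1..n-1. eT_xi n j\<bar> = 1 / 2 ^ s"
proof -
  define \<psi> where "\<psi> j = (2 * real j - 1) * pi / (4 * real s)" for j
  have rn: "real n - 1 = 2 * real s" using n by simp
  have pair: "\<bar>eT_xi n j * eT_xi n (2*s+1-j)\<bar> = cos (\<psi> j) / (2 * sin (\<psi> j))"
     and pos: "sin (\<psi> j) > 0" "cos (\<psi> j) > 0"
    if j: "j \<in> {1..s}" for j
  proof -
    define \<phi> where "\<phi> = (2 * real j - 1) * pi / (4 * (real n - 1))"
    define j' where "j' = 2*s+1-j"
    have j'1: "j' \<ge> 1" "j' \<le> n - 1" using j n unfolding j'_def by auto
    have "(2 * real j' - 1) * pi / (4 * (real n - 1)) = pi / 2 - \<phi>"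
    proof -
      have e: "real j' = 2 * real s + 1 - real j" unfolding j'_def using j by (simp add: of_nat_diff)
      show ?thesis unfolding \<phi>_def rn e using s by (simp add: field_simps)
    qed
    then have F2: "eT_xi n j' = (cos \<phi> + (if even j' then -1 else 1) * sin \<phi>) / (2 * cos \<phi>)"
      using F_eq(3)[of n j'] j'1 n s by (simp add: sin_diff cos_diff)
    have j1: "j \<ge> 1" "j \<le> n - 1" using j n by auto
    have n2: "n \<ge> 2" using n s by auto
    note F1 = F_eq[of n j, OF n2 j1, folded \<phi>_def]
    have par: "even j' \<longleftrightarrow> odd j"
    proof -
      have "j \<le> s" using j by auto
      then show ?thesis unfolding j'_def by presburger
    qed
    have psi: "\<psi> j = 2 * \<phi>" unfolding \<psi>_def \<phi>_def rn by simp
    have jr: "2 * real j - 1 > 0" "2 * real j - 1 < 2 * real s" using j by auto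
    have ppos: "\<psi> j > 0" "\<psi> j < pi / 2"
      unfolding \<psi>_def using s jr by (simp_all add: pos_divide_less_eq)
    show "sin (\<psi> j) > 0" "cos (\<psi> j) > 0" using ppos by (auto intro!: sin_gt_zero cos_gt_zero)
    have "eT_xi n j * eT_xi n j' = (if even j then -1 else 1) * (cos (\<psi> j) / (2 * sin (\<psi> j)))"
      unfolding F1(3) F2 psi cos_double sin_double using par F1(1,2)
      by (cases "even j") (simp_all add: field_simps power2_eq_square)
    then show "\<bar>eT_xi n j * eT_xi n (2*s+1-j)\<bar> = cos (\<psi> j) / (2 * sin (\<psi> j))"
      unfolding j'_def using ppos \<open>sin (\<psi> j) > 0\<close> \<open>cos (\<psi> j) > 0\<close> by (simp add: abs_mult)
  qed
  have nm: "n - 1 = 2 * s" using n by simp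
  have "\<bar>\<Prod>j=1..n-1. eT_xi n j\<bar> = (\<Prod>j=1..s. \<bar>eT_xi n j * eT_xi n (2*s+1-j)\<bar>)"
    unfolding nm prod_pair_even abs_prod by simp
  also have "\<dots> = (\<Prod>j=1..s. cos (\<psi> j) / (2 * sin (\<psi> j)))"
    by (rule prod.cong[OF refl], rule pair, assumption)
  also have "\<dots> = (\<Prod>j=1..s. cos (\<psi> j)) / (2 ^ s * (\<Prod>j=1..s. sin (\<psi> j)))"
    by (simp add: prod_dividef prod.distrib)
  also have "(\<Prod>j=1..s. cos (\<psi> j)) = (\<Prod>j=1..s. cos (\<psi> (s+1-j)))" by (rule prod_rev1)
  also have "\<dots> = (\<Prod>j=1..s. sin (\<psi> j))"
  proof (rule prod.cong[OF refl])
    fix j assume j: "j \<in> {1..s}"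
    have e: "real (s+1-j) = real s + 1 - real j" using j by (simp add: of_nat_diff)
    have "\<psi> (s+1-j) = pi / 2 - \<psi> j" unfolding \<psi>_def e using s by (simp add: field_simps)
    then show "cos (\<psi> (s+1-j)) = sin (\<psi> j)" by (simp add: cos_diff)
  qed
  also have "(\<Prod>j=1..s. sin (\<psi> j)) > 0" by (rule prod_pos) (use pos in auto)
  then have "(\<Prod>j=1..s. sin (\<psi> j)) / (2 ^ s * (\<Prod>j=1..s. sin (\<psi> j))) = 1 / 2 ^ s"
    by (simp del: prod_zero_iff)
  finally show ?thesis .
qed


lemma cos_prod:
  assumes m: "m = 4 * t + 1"
  shows "(\<Prod>k=1..2*t. cos (real k * pi / real m)) = 1 / 2 ^ (2*t)"
proof -
  have mpos: "real m > 0" using m by simp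
  have ang: "real k * pi / real m > 0" "real k * pi / real m < pi / 2" if "k \<in> {1..2*t}" for k
  proof -
    have "real k / real m < 1 / 2" using that m by (simp add: field_simps)
    then have "real k / real m * pi < 1 / 2 * pi" by (rule mult_strict_right_mono) simp_all
    then show "real k * pi / real m < pi / 2" by simp
    show "real k * pi / real m > 0" using that mpos by simp
  qed
  have spos: "(\<Prod>k=1..2*t. sin (real k * pi / real m)) > 0"
  proof (rule prod_pos)
    fix k assume k: "k \<in> {1..2*t}"
    have "real k * pi / real m < pi" using ang(2)[OF k] pi_gt_zero by linarith
    then show "sin (real k * pi / real m) > 0" using ang(1)[OF k] by (intro sin_gt_zero)
  qed
  have "(\<Prod>k=1..2*t. sin (2 * (real k * pi / real m))) =
        (\<Prod>k=1..2*t. 2 * (sin (real k * pi / real m) * cos (real k * pi / real m)))"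
    by (simp only: sin_double mult.assoc)
  also have "\<dots> = 2 ^ (2*t) * (\<Prod>k=1..2*t. sin (real k * pi / real m)) * (\<Prod>k=1..2*t. cos (real k * pi / real m))"
    by (simp add: prod.distrib)
  finally have 1: "(\<Prod>k=1..2*t. sin (2 * (real k * pi / real m))) = \<dots>" .
  have 2: "(\<Prod>k=1..2*t. sin (2 * (real k * pi / real m))) = (\<Prod>k=1..2*t. sin (real k * pi / real m))"
  proof (rule prod.reindex_bij_witness[where j="\<lambda>k. if k \<le> t then 2*k else 4*t+1-2*k"
                                     and i="\<lambda>l. if even l then l div 2 else (4*t+1-l) div 2"])
    fix a assume a: "a \<in> {1..2*t}"
    then show "(if even (if a \<le> t then 2*a else 4*t+1-2*a) then (if a \<le> t then 2*a else 4*t+1-2*a) div 2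
       else (4*t+1-(if a \<le> t then 2*a else 4*t+1-2*a)) div 2) = a" by (auto; presburger)
    show "(if a \<le> t then 2*a else 4*t+1-2*a) \<in> {1..2*t}" using a by auto
    show "sin (real (if a \<le> t then 2*a else 4*t+1-2*a) * pi / real m) = sin (2 * (real a * pi / real m))"
    proof (cases "a \<le> t")
      case True then show ?thesis by (simp add: mult.assoc)
    next
      case False
      have e: "real (4*t+1-2*a) = real m - 2 * real a" using False a m by (simp add: of_nat_diff)
      have "real (4*t+1-2*a) * pi / real m = pi - 2 * (real a * pi / real m)"
        unfolding e using mpos by (simp add: field_simps)
      then show ?thesis using False by (simp add: sin_diff)
    qed
  next
    fix b assume b: "b \<in> {1..2*t}"
    then show "(if (if even b then b div 2 else (4*t+1-b) div 2) \<le> t then 2*(if even b then b div 2 else (4*t+1-b) div 2)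
       else 4*t+1-2*(if even b then b div 2 else (4*t+1-b) div 2)) = b" by (auto; presburger)
    show "(if even b then b div 2 else (4*t+1-b) div 2) \<in> {1..2*t}" using b by (auto; presburger)
  qed
  define P where "P = (\<Prod>k=1..2*t. sin (real k * pi / real m))"
  define C where "C = (\<Prod>k=1..2*t. cos (real k * pi / real m))"
  have "P = 2 ^ (2*t) * P * C" using 1 2 unfolding P_def C_def by simp
  moreover have "P > 0" using spos unfolding P_def .
  ultimately have "2 ^ (2*t) * C = 1" by (metis mult.commute mult.left_neutral mult_cancel_left2 less_irrefl mult.assoc)
  then show ?thesis unfolding C_def[symmetric] by (simp add: field_simps)
qed


lemma odd_case:
  assumes n: "n = 4 * t + 2" and t: "t \<ge> 1"
  shows "\<bar>\<Prod>j=1..n-1. eT_xi n j\<bar> = 1 / 2 ^ (2*t)"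
proof -
  define m where "m = 4 * t + 1"
  define c where "c k = cos (real k * pi / real m)" for k
  define g where "g j = (if odd j then (2*t+1-j) div 2 else (2*t+j) div 2)" for j
  have rn: "real n - 1 = real m" using n unfolding m_def by simp
  have mpos: "real m > 0" unfolding m_def by simp
  have n2: "n \<ge> 2" using n by simp
  have cpos: "c k > 0" "c k < 1" if k: "k \<in> {1..2*t}" for k
  proof -
    have "real k / real m < 1 / 2" using k unfolding m_def by (simp add: field_simps)
    then have "real k / real m * pi < 1 / 2 * pi" by (rule mult_strict_right_mono) simp_all
    then have a: "real k * pi / real m < pi / 2" by simp
    have b: "real k * pi / real m > 0" using k mpos by simp
    show "c k > 0" unfolding c_def using a b by (intro cos_gt_zero) auto
    have "real k * pi / real m \<le> pi" using a pi_gt_zero by linarith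
    then have "cos (real k * pi / real m) < cos 0" using b by (intro cos_monotone_0_pi) auto
    then show "c k < 1" unfolding c_def by simp
  qed
  have pair: "\<bar>eT_xi n j * eT_xi n (4*t+2-j)\<bar> = (2 * c (g j) ^ 2) / (2 * c (2*t+1-j))"
    if j: "j \<in> {1..2*t}" for j
  proof -
    define \<phi> where "\<phi> = (2 * real j - 1) * pi / (4 * (real n - 1))"
    define j' where "j' = 4*t+2-j"
    define x where "x = real (2*t+1-j) * pi / real m"
    have j'1: "j' \<ge> 1" "j' \<le> n - 1" using j n unfolding j'_def by auto
    have "(2 * real j' - 1) * pi / (4 * (real n - 1)) = pi / 2 - \<phi>"
    proof -
      have e: "real j' = 4 * real t + 2 - real j" unfolding j'_def using j by (simp add: of_nat_diff)
      show ?thesis unfolding \<phi>_def rn e m_def using t by (simp add: field_simps)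
    qed
    then have F2: "eT_xi n j' = (cos \<phi> + (if even j' then -1 else 1) * sin \<phi>) / (2 * cos \<phi>)"
      using F_eq(3)[of n j'] j'1 n2 by (simp add: sin_diff cos_diff)
    have j1: "j \<ge> 1" "j \<le> n - 1" using j n by auto
    note F1 = F_eq[of n j, OF n2 j1, folded \<phi>_def]
    have par: "even j' \<longleftrightarrow> even j"
    proof -
      have "j \<le> 2*t" using j by auto
      then show ?thesis unfolding j'_def by presburger
    qed
    have ex: "real (2*t+1-j) = 2 * real t + 1 - real j" using j by (simp add: of_nat_diff)
    have x: "2 * \<phi> = pi / 2 - x" unfolding \<phi>_def x_def rn ex m_def using t by (simp add: field_simps)
    have sc: "2 * sin \<phi> * cos \<phi> = cos x"
      using sin_double[of \<phi>] unfolding x by (simp add: sin_diff)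
    have cx: "cos x = c (2*t+1-j)" unfolding x_def c_def ..
    have cxb: "cos x > 0" "cos x < 1" 
    proof -
      have k: "2*t+1-j \<in> {1..2*t}" using j by auto
      show "cos x > 0" "cos x < 1" unfolding cx using cpos[OF k] by auto
    qed
    have prodeq: "eT_xi n j * eT_xi n j' = (cos x + (if even j then -1 else 1)) / (2 * cos x)"
      unfolding F1(3) F2 sc[symmetric] using par F1(1,2)
      by (cases "even j") (simp_all add: field_simps power2_eq_square)
    have gj: "2 * real (g j) = (if odd j then 2 * real t + 1 - real j else 2 * real t + real j)"
    proof -
      have "2 * g j = (if odd j then 2*t+1-j else 2*t+j)" unfolding g_def using j by auto
      then have "real (2 * g j) = real (if odd j then 2*t+1-j else 2*t+j)" by simp
      then show ?thesis using j by (auto simp: of_nat_diff)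
    qed
    have num: "1 + (if even j then -1 else 1) * cos x = 2 * c (g j) ^ 2"
    proof (cases "even j")
      case True
      have gv: "real (g j) = (2 * real t + real j) / 2" using gj True by simp
      have "2 * (real (g j) * pi / real m) = pi - x"
        unfolding x_def ex m_def gv using t by (simp add: field_simps)
      then have "cos (2 * (real (g j) * pi / real m)) = - cos x" by (simp add: cos_diff)
      moreover note cos_double_cos[of "real (g j) * pi / real m"]
      ultimately show ?thesis using True unfolding c_def by simp
    next
      case False
      have gv: "real (g j) = (2 * real t + 1 - real j) / 2" using gj False by simp
      have "2 * (real (g j) * pi / real m) = x"
        unfolding x_def ex m_def gv using t by (simp add: field_simps)
      then have "cos (2 * (real (g j) * pi / real m)) = cos x" by simp
      moreover note cos_double_cos[of "real (g j) * pi / real m"]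
      ultimately show ?thesis using False unfolding c_def by simp
    qed
    have "\<bar>cos x + (if even j then -1 else 1)\<bar> = 1 + (if even j then -1 else 1) * cos x"
      using cxb by auto
    then show ?thesis unfolding j'_def[symmetric] prodeq num cx[symmetric] using cxb
      by (simp add: abs_divide)
  qed
  have mid: "eT_xi n (2*t+1) = 1"
  proof -
    have a: "(2 * real (2*t+1) - 1) * pi / (4 * (real n - 1)) = pi / 4"
      unfolding rn m_def by (simp add: field_simps)
    show ?thesis using F_eq(3)[of n "2*t+1"] n t unfolding a by (simp add: sin_45 cos_45)
  qed
  have nm: "n - 1 = 2 * (2 * t) + 1" using n by simp
  have "\<bar>\<Prod>j=1..n-1. eT_xi n j\<bar> = (\<Prod>j=1..2*t. \<bar>eT_xi n j * eT_xi n (4*t+2-j)\<bar>)"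
    unfolding nm prod_pair_odd abs_prod abs_mult mid by (simp add: numeral_Bit0 add.assoc)
  also have "\<dots> = (\<Prod>j=1..2*t. (2 * c (g j) ^ 2) / (2 * c (2*t+1-j)))"
    by (rule prod.cong[OF refl], rule pair, assumption)
  also have "\<dots> = (2 ^ (2*t) * (\<Prod>j=1..2*t. c (g j)) ^ 2) / (2 ^ (2*t) * (\<Prod>j=1..2*t. c (2*t+1-j)))"
    by (simp add: prod_dividef prod.distrib prod_power_distrib)
  also have "(\<Prod>j=1..2*t. c (g j)) = (\<Prod>k=1..2*t. c k)"
  proof (rule prod.reindex_bij_witness[where j=g and i="\<lambda>k. if k \<le> t then 2*t+1-2*k else 2*k-2*t"])
    fix a assume a: "a \<in> {1..2*t}"
    then show "(if g a \<le> t then 2*t+1-2*g a else 2*g a-2*t) = a" unfolding g_def by (auto; presburger)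
    show "g a \<in> {1..2*t}" using a unfolding g_def by (auto; presburger)
    show "c (g a) = c (g a)" ..
  next
    fix b assume b: "b \<in> {1..2*t}"
    then show "g (if b \<le> t then 2*t+1-2*b else 2*b-2*t) = b" unfolding g_def by (auto; presburger)
    show "(if b \<le> t then 2*t+1-2*b else 2*b-2*t) \<in> {1..2*t}" using b by auto
  qed
  also have "(\<Prod>j=1..2*t. c (2*t+1-j)) = (\<Prod>k=1..2*t. c k)" by (rule prod_rev1[symmetric])
  also have "(\<Prod>k=1..2*t. c k) = 1 / 2 ^ (2*t)" unfolding c_def by (rule cos_prod) (simp add: m_def)
  finally show ?thesis by (simp add: power2_eq_square)
qed


lemma zero_case:
  assumes n: "n = 4 * t" and t: "t \<ge> 1"
  shows "eT_xi n (n div 2) = 0 \<and> (\<forall>j \<in> {1..n - 1} - {n div 2}. eT_xi n j \<noteq> 0)"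
proof
  have n2: "n \<ge> 2" using n t by simp
  have rn: "real n - 1 = 4 * real t - 1" using n t by simp
  have nd: "n div 2 = 2 * t" using n by simp
  have a: "(2 * real (2*t) - 1) * pi / (4 * (real n - 1)) = pi / 4"
  proof -
    have "4 * real t - 1 > 0" using t by simp
    then show ?thesis unfolding rn by (simp add: field_simps)
  qed
  show "eT_xi n (n div 2) = 0"
  proof -
    have "2 * t \<le> n - 1" "1 \<le> 2 * t" using n t by auto
    from F_eq(3)[OF n2 this(2,1)] show ?thesis unfolding nd a by (simp add: sin_45 cos_45)
  qed
  show "\<forall>j \<in> {1..n - 1} - {n div 2}. eT_xi n j \<noteq> 0"
  proof
    fix j assume j: "j \<in> {1..n - 1} - {n div 2}"
    define \<phi> where "\<phi> = (2 * real j - 1) * pi / (4 * (real n - 1))"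
    have j1: "j \<ge> 1" "j \<le> n - 1" using j by auto
    note F1 = F_eq[of n j, OF n2 j1, folded \<phi>_def]
    have "sin \<phi> + (if even j then -1 else 1) * cos \<phi> \<noteq> 0"
    proof (cases "even j")
      case False then show ?thesis using F1(1,2) by simp
    next
      case True
      show ?thesis
      proof
        assume "sin \<phi> + (if even j then -1 else 1) * cos \<phi> = 0"
        then have "cos (pi / 2 - \<phi>) = cos \<phi>" using True by (simp add: cos_diff)
        note e = this
        have b: "0 \<le> pi / 2 - \<phi>" "pi / 2 - \<phi> \<le> pi" "0 \<le> \<phi>" "\<phi> \<le> pi"
          using F1(4,5) pi_gt_zero by linarith+
        have "pi / 2 - \<phi> = \<phi>" by (rule cos_inj_pi[OF b e])
        then have "\<phi> = pi / 4" by simp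
        then have "(2 * real j - 1) = (real n - 1)"
        proof -
          have p: "4 * (real n - 1) > 0" using n t by simp
          have "(2 * real j - 1) * pi = pi / 4 * (4 * (real n - 1))"
            using \<open>\<phi> = pi / 4\<close> p unfolding \<phi>_def by (simp add: divide_eq_eq)
          then have "(2 * real j - 1) * pi = (real n - 1) * pi" by simp
          then show ?thesis by simp
        qed
        then have "j = n div 2" using n by simp
        then show False using j by simp
      qed
    qed
    then show "eT_xi n j \<noteq> 0" unfolding F1(3) using F1(1) by simp
  qed
qed


lemma abs_to_pm:
  fixes P v :: real
  assumes "\<bar>P\<bar> = v" "v > 0"
  shows "(P = v \<or> P = - v) \<and> P \<noteq> 0"
  using assms by auto

theorem lemma4p3:
  fixes n :: nat
  assumes "n \<ge> 4"
  shows "(n mod 4 \<noteq> 0 \<longrightarrow>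
            ((\<Prod>j = 1..n - 1. eT_xi n j) = 2 powr (1 - real_of_int \<lceil>real n / 2\<rceil>)
             \<or> (\<Prod>j = 1..n - 1. eT_xi n j) = - (2 powr (1 - real_of_int \<lceil>real n / 2\<rceil>)))
            \<and> (\<Prod>j = 1..n - 1. eT_xi n j) \<noteq> 0)
       \<and> (n mod 4 = 0 \<longrightarrow>
            eT_xi n (n div 2) = 0 \<and> (\<forall>j \<in> {1..n - 1} - {n div 2}. eT_xi n j \<noteq> 0))"
proof (rule conjI; intro impI)
  assume nm: "n mod 4 \<noteq> 0"
  have "\<bar>\<Prod>j = 1..n - 1. eT_xi n j\<bar> = 2 powr (1 - real_of_int \<lceil>real n / 2\<rceil>)"
  proof (cases "even n")
    case False
    then obtain s where n: "n = 2 * s + 1" by (metis oddE)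
    have s: "s \<ge> 1" using n assms by simp
    have "real n / 2 = real s + 1 / 2" using n by simp
    then have c: "\<lceil>real n / 2\<rceil> = int s + 1" by (simp add: ceiling_eq_iff)
    have "2 powr (1 - real_of_int \<lceil>real n / 2\<rceil>) = 2 powr (- real s)" unfolding c by simp
    also have "\<dots> = 1 / 2 ^ s" by (simp add: powr_minus_divide powr_realpow)
    finally show ?thesis using even_case[OF n s] by simp
  next
    case True
    have "n = 4 * (n div 4) + 2" using True nm by presburger
    then obtain t where n: "n = 4 * t + 2" by blast
    have t: "t \<ge> 1" using n assms by simp
    have "real n / 2 = real (2 * t + 1)" using n by simp
    then have c: "\<lceil>real n / 2\<rceil> = int (2 * t + 1)" by (simp only: ceiling_of_nat)
    have "2 powr (1 - real_of_int \<lceil>real n / 2\<rceil>) = 2 powr (- real (2 * t))" unfolding c by simp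
    also have "\<dots> = 1 / 2 ^ (2 * t)" by (simp only: powr_minus_divide powr_realpow)
    finally show ?thesis using odd_case[OF n t] by simp
  qed
  then show "((\<Prod>j = 1..n - 1. eT_xi n j) = 2 powr (1 - real_of_int \<lceil>real n / 2\<rceil>)
             \<or> (\<Prod>j = 1..n - 1. eT_xi n j) = - (2 powr (1 - real_of_int \<lceil>real n / 2\<rceil>)))
            \<and> (\<Prod>j = 1..n - 1. eT_xi n j) \<noteq> 0"
    by (rule abs_to_pm) simp
next
  assume "n mod 4 = 0"
  then obtain t where n: "n = 4 * t" by auto
  have t: "t \<ge> 1" using n assms by simp
  show "eT_xi n (n div 2) = 0 \<and> (\<forall>j \<in> {1..n - 1} - {n div 2}. eT_xi n j \<noteq> 0)"
    using zero_case[OF n t] by blast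
qed

end
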